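(* Let $t_1, t_2 \in \mathcal{L}_r$ with $t_1 =_{\mathcal{L}} t_2$. Then for all finite $E \subseteq \mathcal{X}$, $x \in \mathcal{X}$, $S \in \mathbb{N}$: $A(E, x, S)$ is one of the sublevels of $t_1$ if and only if $A(E, x, S)$ is one of the sublevels of $t_2$.
   Context: $\mathcal{X}$ is a countable set of variables; a valuation is $\sigma\colon\mathcal{X}\to\mathbb{N}$. For finite $E\subseteq\mathcal{X}$, $x\in\mathcal{X}$, $S\in\mathbb{N}$, the sublevels $A(E,x,S)$ and $B(E,S)$ have values $[A(E,x,S)]_\sigma = 0$ if some $y\in E$ has $\sigma(y)=0$, and $\sigma(x)+S$ otherwise; $[B(E,S)]_\sigma=0$ if some $y\in E$ has $\sigma(y)=0$, and $S$ otherwise. $\mathcal{L}_s$ is the set of sublevels $A(E,x,S)$ with $x\in E$ and $B(E,S)$ with $S>0$. $t_1\leqslant_{\mathcal{L}} t_2$ (resp. $t_1 =_{\mathcal{L}} t_2$) means $[t_1]_\sigma\le[t_2]_\sigma$ (resp. $=$) for every valuation $\sigma$; $\max$ of a finite family is evaluated pointwise (empty max has value $0$). Two sublevels $u,v$ are incomparable if neither $u\leqslant_{\mathcal{L}} v$ nor $v\leqslant_{\mathcal{L}} u$. A minimal representation is a formal expression $\max(u_1,\ldots,u_n)$ where $\{u_1,\ldots,u_n\}$ is a finite set of elements of $\mathcal{L}_s$ that are pairwise incomparable ($u_i$ and $u_j$ incomparable for $i\ne j$); $\mathcal{L}_r$ is the set of minimal representations, and the $u_i$ are called its sublevels. *)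

theory Defs
  imports Main "HOL-Library.Countable"
begin

datatype 'x sublevel = A "'x set" 'x nat | B "'x set" nat

type_synonym 'x valuation = "'x \<Rightarrow> nat"

fun sl_eval :: "'x sublevel \<Rightarrow> 'x valuation \<Rightarrow> nat" where
  "sl_eval (A E x S) \<sigma> = (if \<exists>y\<in>E. \<sigma> y = 0 then 0 else \<sigma> x + S)"
| "sl_eval (B E S) \<sigma> = (if \<exists>y\<in>E. \<sigma> y = 0 then 0 else S)"

definition in_Ls :: "'x sublevel \<Rightarrow> bool" where
  "in_Ls u \<longleftrightarrow> (case u of
      A E x S \<Rightarrow> finite E \<and> x \<in> E
    | B E S \<Rightarrow> finite E \<and> S > 0)"

definition sl_le :: "'x sublevel \<Rightarrow> 'x sublevel \<Rightarrow> bool" where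
  "sl_le u v \<longleftrightarrow> (\<forall>\<sigma>. sl_eval u \<sigma> \<le> sl_eval v \<sigma>)"

definition incomparable :: "'x sublevel \<Rightarrow> 'x sublevel \<Rightarrow> bool" where
  "incomparable u v \<longleftrightarrow> \<not> sl_le u v \<and> \<not> sl_le v u"

text \<open>A formal expression max(u_1,...,u_n) is represented by its finite set
  of sublevels {u_1,...,u_n}.\<close>
definition max_eval :: "'x sublevel set \<Rightarrow> 'x valuation \<Rightarrow> nat" where
  "max_eval T \<sigma> = Max (insert 0 ((\<lambda>u. sl_eval u \<sigma>) ` T))"

definition in_Lr :: "'x sublevel set \<Rightarrow> bool" where
  "in_Lr T \<longleftrightarrow> finite T \<and> (\<forall>u\<in>T. in_Ls u)
     \<and> (\<forall>u\<in>T. \<forall>v\<in>T. u \<noteq> v \<longrightarrow> incomparable u v)"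

definition Lr_eq :: "'x sublevel set \<Rightarrow> 'x sublevel set \<Rightarrow> bool" where
  "Lr_eq T1 T2 \<longleftrightarrow> (\<forall>\<sigma>. max_eval T1 \<sigma> = max_eval T2 \<sigma>)"

end

theory Submission
  imports Defs
begin

lemma le_max_eval: "finite T \<Longrightarrow> u \<in> T \<Longrightarrow> sl_eval u \<sigma> \<le> max_eval T \<sigma>"
  unfolding max_eval_def by (intro Max_ge) auto

lemma max_eval_attained: assumes "finite T" "max_eval T \<sigma> > 0"
  shows "\<exists>u\<in>T. sl_eval u \<sigma> = max_eval T \<sigma>"
proof -
  have "max_eval T \<sigma> \<in> insert 0 ((\<lambda>u. sl_eval u \<sigma>) ` T)"
    unfolding max_eval_def using assms(1) by (intro Max_in) auto
  then show ?thesis using assms(2) by auto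
qed

fun sl_const :: "'x sublevel \<Rightarrow> nat" where
  "sl_const (A E x S) = S" | "sl_const (B E S) = S"

lemma key:
  assumes t2: "in_Lr t2" and le: "\<forall>\<sigma>. sl_eval (A E x S) \<sigma> \<le> max_eval t2 \<sigma>" and xE: "x \<in> E"
  shows "\<exists>E' S'. A E' x S' \<in> t2 \<and> E' \<subseteq> E \<and> S \<le> S'"
proof -
  have fin: "finite t2" using t2 unfolding in_Lr_def by auto
  define M where "M = Max (insert 0 (sl_const ` t2))"
  have M: "\<And>u. u \<in> t2 \<Longrightarrow> sl_const u \<le> M"
    unfolding M_def using fin by (intro Max_ge) auto
  define \<sigma> where "\<sigma> = (\<lambda>y. if y = x then M+2 else if y \<in> E then 1 else (0::nat))"
  have "sl_eval (A E x S) \<sigma> = M+2+S" using xE by (auto simp: \<sigma>_def)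
  with le have ge: "max_eval t2 \<sigma> \<ge> M+2+S" by metis
  then obtain u where u: "u \<in> t2" "sl_eval u \<sigma> = max_eval t2 \<sigma>"
    proof -
    have "max_eval t2 \<sigma> > 0" using ge by linarith
    then show ?thesis using max_eval_attained[OF fin, of \<sigma>] that by blast
  qed
  have Mu: "sl_const u \<le> M" using M u(1) by auto
  have ls: "in_Ls u" using t2 u(1) unfolding in_Lr_def by auto
  show ?thesis
  proof (cases u)
    case (A E' x' S')
    have x'E': "x' \<in> E'" using ls A by (simp add: in_Ls_def)
    have val: "sl_eval u \<sigma> \<ge> M+2+S" using u ge by simp
    then have nz: "\<not> (\<exists>y\<in>E'. \<sigma> y = 0)" using A by (auto split: if_splits)
    then have sub: "E' \<subseteq> E" using xE by (auto simp: \<sigma>_def split: if_splits)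
    have "x' = x"
    proof (rule ccontr)
      assume "x' \<noteq> x"
      then have "\<sigma> x' = 1" using sub x'E' by (auto simp: \<sigma>_def)
      then show False using val nz A Mu by simp
    qed
    then have "sl_eval u \<sigma> = M+2+S'" using A nz by (simp add: \<sigma>_def)
    then have "S \<le> S'" using val by linarith
    then show ?thesis using A u sub \<open>x' = x\<close> by blast
  next
    case (B E' S')
    have "sl_eval u \<sigma> \<le> S'" using B by simp
    then have "M+2+S \<le> S'" using u(2) ge by linarith
    moreover have "S' \<le> M" using Mu B by simp
    ultimately show ?thesis by linarith
  qed
qed

lemma one_dir:
  assumes t1: "in_Lr t1" and t2: "in_Lr t2" and eq: "Lr_eq t1 t2" and u: "A E x S \<in> t1"
  shows "A E x S \<in> t2"
proof -
  have f1: "finite t1" and f2: "finite t2" using t1 t2 unfolding in_Lr_def by auto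
  have xE: "x \<in> E" using t1 u unfolding in_Lr_def in_Ls_def by fastforce
  have "\<forall>\<sigma>. sl_eval (A E x S) \<sigma> \<le> max_eval t2 \<sigma>"
    using le_max_eval[OF f1 u] eq unfolding Lr_eq_def by simp
  then obtain E' S' where v: "A E' x S' \<in> t2" "E' \<subseteq> E" "S \<le> S'"
    using key[OF t2 _ xE] by blast
  have xE': "x \<in> E'" using t2 v(1) unfolding in_Lr_def in_Ls_def by fastforce
  have "\<forall>\<sigma>. sl_eval (A E' x S') \<sigma> \<le> max_eval t1 \<sigma>"
    using le_max_eval[OF f2 v(1)] eq unfolding Lr_eq_def by simp
  then obtain E'' S'' where w: "A E'' x S'' \<in> t1" "E'' \<subseteq> E'" "S' \<le> S''"
    using key[OF t1 _ xE'] by blast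
  have "sl_le (A E x S) (A E'' x S'')"
    unfolding sl_le_def
  proof
    fix \<sigma>
    have sub: "E'' \<subseteq> E" using v(2) w(2) by blast
    show "sl_eval (A E x S) \<sigma> \<le> sl_eval (A E'' x S'') \<sigma>"
    proof (cases "\<exists>y\<in>E. \<sigma> y = 0")
      case True then show ?thesis by simp
    next
      case False
      then have "\<not> (\<exists>y\<in>E''. \<sigma> y = 0)" using sub by blast
      then show ?thesis using False v(3) w(3) by auto
    qed
  qed
  moreover have inc: "\<forall>u\<in>t1. \<forall>v\<in>t1. u \<noteq> v \<longrightarrow> incomparable u v"
    using t1 unfolding in_Lr_def by blast
  ultimately have "A E x S = A E'' x S''"
    using u w(1) unfolding incomparable_def by metis
  then have "E' = E" "S' = S" using v w by auto
  then show ?thesis using v by simp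
qed

theorem proposition31:
  fixes t1 t2 :: "('x::countable) sublevel set"
  assumes "in_Lr t1" and "in_Lr t2" and "Lr_eq t1 t2"
  shows "\<forall>E x S. finite E \<longrightarrow> (A E x S \<in> t1 \<longleftrightarrow> A E x S \<in> t2)"
proof -
  have "Lr_eq t2 t1" using assms(3) unfolding Lr_eq_def by simp
  then show ?thesis using one_dir[OF assms(1,2,3)] one_dir[OF assms(2,1)] by blast
qed

end
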